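(* Let $k,m$ be integers with $0<k$ and $2k<m$, and let $n=2k-1$. Then $\alpha(m,n,k)=\binom{n}{k}=h(m,n,k)$, and $\binom{[n]}{k}$ is the unique $(m,n,k)$-intersecting family of maximum cardinality.
   Context: For positive integers $a\leqslant b$, $[a,b]=\{a,a+1,\dots,b\}$ and $[a]=[1,a]$; $\binom{X}{k}$ denotes the family of all $k$-subsets of a set $X$. A family of sets is intersecting if no two of its members are disjoint. For integers $0<k\leqslant n<2k\leqslant m$, an $(m,n,k)$-intersecting family is an intersecting family $\mathcal{F}$ with $\binom{[n]}{k}\subseteq\mathcal{F}\subseteq\binom{[m]}{k}$, and $\alpha(m,n,k)$ is the maximum cardinality of an $(m,n,k)$-intersecting family. Define $h(m,n,k)=\binom{n}{k}+\sum_{i=1}^{2k-n-1}\binom{n-1}{k-i-1}\binom{m-n}{i}$ (an empty sum is $0$). *)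

theory Defs
  imports Main
begin

definition ksubsets :: "'a set \<Rightarrow> nat \<Rightarrow> 'a set set" where
  "ksubsets X k = {A. A \<subseteq> X \<and> card A = k}"

definition intersecting :: "'a set set \<Rightarrow> bool" where
  "intersecting F \<longleftrightarrow> (\<forall>A\<in>F. \<forall>B\<in>F. A \<inter> B \<noteq> {})"

definition mnk_intersecting :: "nat \<Rightarrow> nat \<Rightarrow> nat \<Rightarrow> nat set set \<Rightarrow> bool" where
  "mnk_intersecting m n k F \<longleftrightarrow>
     intersecting F \<and> ksubsets {1..n} k \<subseteq> F \<and> F \<subseteq> ksubsets {1..m} k"

definition alpha :: "nat \<Rightarrow> nat \<Rightarrow> nat \<Rightarrow> nat" where
  "alpha m n k = Max (card ` {F. mnk_intersecting m n k F})"

definition h :: "nat \<Rightarrow> nat \<Rightarrow> nat \<Rightarrow> nat" where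
  "h m n k = (n choose k) +
     (\<Sum>i\<in>{1..int (2*k) - int n - 1}. ((n - 1) choose (k - nat i - 1)) * ((m - n) choose (nat i)))"

end

theory Submission
  imports Defs
begin

lemma S_inter:
  assumes "0 < k" "n = 2 * k - 1"
  shows "intersecting (ksubsets {1..n} k)"
  unfolding intersecting_def ksubsets_def
proof (intro ballI notI)
  fix A B assume A: "A \<in> {A. A \<subseteq> {1..n} \<and> card A = k}" and B: "B \<in> {A. A \<subseteq> {1..n} \<and> card A = k}"
    and d: "A \<inter> B = {}"
  have fA: "finite A" "finite B" using A B finite_subset by auto
  have "card (A \<union> B) = 2 * k" using card_Un_disjoint[OF fA d] A B by simp
  moreover have "card (A \<union> B) \<le> card {1..n}" using A B by (intro card_mono) auto
  ultimately show False using assms by simp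
qed

lemma F_eq:
  assumes "0 < k" "n = 2 * k - 1" "mnk_intersecting m n k F"
  shows "F = ksubsets {1..n} k"
proof
  show "ksubsets {1..n} k \<subseteq> F" using assms(3) unfolding mnk_intersecting_def by blast
  show "F \<subseteq> ksubsets {1..n} k"
  proof
    fix A assume AF: "A \<in> F"
    have Am: "A \<subseteq> {1..m}" "card A = k" using assms(3) AF unfolding mnk_intersecting_def ksubsets_def by auto
    have fA: "finite A" using Am finite_subset by blast
    show "A \<in> ksubsets {1..n} k"
    proof (rule ccontr)
      assume "A \<notin> ksubsets {1..n} k"
      hence "\<not> A \<subseteq> {1..n}" using Am unfolding ksubsets_def by auto
      hence "A \<inter> {1..n} \<subset> A" by auto
      hence c1: "card (A \<inter> {1..n}) < k" using psubset_card_mono[OF fA] Am by auto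
      have "card ({1..n} - A) = n - card ({1..n} \<inter> A)" using card_Diff_subset_Int[of "{1..n}" A] by simp
      also have "{1..n} \<inter> A = A \<inter> {1..n}" by auto
      finally have "card ({1..n} - A) \<ge> k" using c1 assms(2) by simp
      then obtain B where B: "B \<subseteq> {1..n} - A" "card B = k" using obtain_subset_with_card_n by metis
      have "B \<in> ksubsets {1..n} k" using B unfolding ksubsets_def by auto
      hence "B \<in> F" using assms(3) unfolding mnk_intersecting_def by blast
      hence "A \<inter> B \<noteq> {}" using AF assms(3) unfolding mnk_intersecting_def intersecting_def by blast
      thus False using B by auto
    qed
  qed
qed

theorem proposition6:
  fixes k m n :: nat
  assumes "0 < k" and "2 * k < m" and "n = 2 * k - 1"
  shows "alpha m n k = n choose k \<and> n choose k = h m n k \<and>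
         mnk_intersecting m n k (ksubsets {1..n} k) \<and>
         (\<forall>F. mnk_intersecting m n k F \<and> card F = alpha m n k \<longrightarrow> F = ksubsets {1..n} k)"
proof -
  have M: "mnk_intersecting m n k (ksubsets {1..n} k)"
  proof -
    have nm: "n \<le> m" using assms(2,3) by linarith
    have "ksubsets {1..n} k \<subseteq> ksubsets {1..m} k" unfolding ksubsets_def using nm by auto
    thus ?thesis unfolding mnk_intersecting_def using S_inter[OF assms(1,3)] by simp
  qed
  have set: "{F. mnk_intersecting m n k F} = {ksubsets {1..n} k}"
  proof (rule set_eqI, rule iffI)
    fix F assume "F \<in> {F. mnk_intersecting m n k F}"
    thus "F \<in> {ksubsets {1..n} k}" using F_eq[OF assms(1,3)] by simp
  next
    fix F assume "F \<in> {ksubsets {1..n} k}"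
    thus "F \<in> {F. mnk_intersecting m n k F}" using M by simp
  qed
  have card: "card (ksubsets {1..n} k) = n choose k"
    unfolding ksubsets_def using n_subsets[of "{1..n}" k] by simp
  have al: "alpha m n k = n choose k" unfolding alpha_def set using card by simp
  have "int (2*k) - int n - 1 = 0" using assms by simp
  hence hh: "h m n k = n choose k" unfolding h_def by simp
  have "\<forall>F. mnk_intersecting m n k F \<and> card F = alpha m n k \<longrightarrow> F = ksubsets {1..n} k"
    using F_eq[OF assms(1,3)] by blast
  thus ?thesis using al hh M by simp
qed

end
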